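(* Let $\kappa\ge3$ be an integer and let $U=\begin{bmatrix} c_{RR} & c_{LR}\\ c_{RL} & c_{LL}\end{bmatrix}\in\mathrm{U}(2)$ satisfy $\overline{c_{LR}}\,\det U=2/\kappa-1$. Consider the Type II quantum walk $Y^\kappa_t$ with coin $U$, initial state $|0,L\rangle$ and reflection phase $\gamma=0$ (Case A) or $\gamma=\pi$ (Case B); this walk describes the distance from the origin of the quantum walk on the $\kappa$-regular tree $\mathbb{T}_\kappa$ started at the root with uniform initial coin state (Case A) or with initial coin state $\kappa^{-1/2}(1,e^{2\pi i/\kappa},\dots,e^{2\pi i(\kappa-1)/\kappa})$ (Case B). Then for every $x\in\{0,1,2,\dots\}$, as $t\to\infty$, $$P(Y_t^\kappa=x)-\frac{1+(-1)^{t+x}}{2}\times\begin{cases}C(\kappa), & x=0,\\ \kappa\, C(\kappa)\left(\frac{1}{\kappa-1}\right)^x, & x>0,\end{cases}\ \longrightarrow 0,$$ where $C(\kappa)=0$ in Case A and $C(\kappa)=\left(\frac{\kappa-2}{\kappa-1}\right)^2$ in Case B.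
   Context: Type II quantum walk: Hilbert space with orthonormal basis $\{|0,L\rangle\}\cup\{|x,R\rangle,|x,L\rangle: x\ge1\}$; unitary evolution $W$ given by $W|0,L\rangle=e^{i\gamma}|1,R\rangle$ and, for $x\ge1$, $W|x,R\rangle=c_{RR}|x+1,R\rangle+c_{LR}|x-1,L\rangle$, $W|x,L\rangle=c_{RL}|x+1,R\rangle+c_{LL}|x-1,L\rangle$ (with $|0,L\rangle$ as $|x-1,L\rangle$ when $x=1$). $P(Y_t^\kappa=x)=\sum_e|\langle e,W^t|0,L\rangle\rangle|^2$, summed over basis vectors $e$ at position $x$ (only $|0,L\rangle$ for $x=0$; $|x,R\rangle,|x,L\rangle$ for $x\ge1$). Equivalently, the parameter $b=\overline{c_{LR}}\det(U)e^{-i\gamma}$ equals $-1+2/\kappa$ in Case A and $1-2/\kappa$ in Case B. *)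

theory Defs
  imports "HOL-Analysis.Analysis"
begin

definition unitary2 :: "complex \<Rightarrow> complex \<Rightarrow> complex \<Rightarrow> complex \<Rightarrow> bool" where
  "unitary2 cRR cLR cRL cLL \<longleftrightarrow>
     cnj cRR * cRR + cnj cRL * cRL = 1 \<and>
     cnj cLR * cLR + cnj cLL * cLL = 1 \<and>
     cnj cRR * cLR + cnj cRL * cLL = 0 \<and>
     cnj cLR * cRR + cnj cLL * cRL = 0"

definition det2 :: "complex \<Rightarrow> complex \<Rightarrow> complex \<Rightarrow> complex \<Rightarrow> complex" where
  "det2 cRR cLR cRL cLL = cRR * cLL - cLR * cRL"

text \<open>A state is a pair (R, L) of amplitude functions: R x is the coefficient of |x,R>
  (x \<ge> 1; R 0 is unused and stays 0), L x is the coefficient of |x,L> (x \<ge> 0).\<close>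
definition qw2_step ::
  "complex \<Rightarrow> complex \<Rightarrow> complex \<Rightarrow> complex \<Rightarrow> real \<Rightarrow>
   (nat \<Rightarrow> complex) \<times> (nat \<Rightarrow> complex) \<Rightarrow> (nat \<Rightarrow> complex) \<times> (nat \<Rightarrow> complex)" where
  "qw2_step cRR cLR cRL cLL \<gamma> \<psi> =
     (let R = fst \<psi>; L = snd \<psi> in
       ((\<lambda>y. if y = 0 then 0
              else if y = 1 then exp (\<i> * complex_of_real \<gamma>) * L 0
              else cRR * R (y - 1) + cRL * L (y - 1)),
        (\<lambda>y. cLR * R (y + 1) + cLL * L (y + 1))))"

definition qw2_init :: "(nat \<Rightarrow> complex) \<times> (nat \<Rightarrow> complex)" where
  "qw2_init = ((\<lambda>_. 0), (\<lambda>y. if y = 0 then 1 else 0))"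

definition qw2_state ::
  "complex \<Rightarrow> complex \<Rightarrow> complex \<Rightarrow> complex \<Rightarrow> real \<Rightarrow> nat \<Rightarrow>
   (nat \<Rightarrow> complex) \<times> (nat \<Rightarrow> complex)" where
  "qw2_state cRR cLR cRL cLL \<gamma> t = (qw2_step cRR cLR cRL cLL \<gamma> ^^ t) qw2_init"

definition qw2_prob ::
  "complex \<Rightarrow> complex \<Rightarrow> complex \<Rightarrow> complex \<Rightarrow> real \<Rightarrow> nat \<Rightarrow> nat \<Rightarrow> real" where
  "qw2_prob cRR cLR cRL cLL \<gamma> t x =
     (let \<psi> = qw2_state cRR cLR cRL cLL \<gamma> t in
       if x = 0 then (cmod (snd \<psi> 0))\<^sup>2
       else (cmod (fst \<psi> x))\<^sup>2 + (cmod (snd \<psi> x))\<^sup>2)"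

end

theory Submission
  imports Defs "HOL-Computational_Algebra.Formal_Power_Series"
begin
unbundle no vec_syntax
notation fps_nth (infixl "$" 75)

definition l1 :: "complex fps \<Rightarrow> bool" where
  "l1 f \<longleftrightarrow> summable (\<lambda>n. norm (f $ n))"

definition ev :: "complex fps \<Rightarrow> complex \<Rightarrow> complex" where
  "ev f s = (\<Sum>n. f $ n * s ^ n)"

lemma l1_summable_s:
  assumes "l1 f" "norm s \<le> 1"
  shows "summable (\<lambda>n. norm (f $ n * s ^ n))"
proof (rule summable_comparison_test[OF _ assms(1)[unfolded l1_def]])
  show "\<exists>N. \<forall>n\<ge>N. norm (norm (f $ n * s ^ n)) \<le> norm (f $ n)"
    using assms(2) by (auto simp: norm_mult norm_power intro!: mult_left_le power_le_one)
qed

lemma ev_sums: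
  assumes "l1 f" "norm s \<le> 1"
  shows "(\<lambda>n. f $ n * s ^ n) sums ev f s"
  unfolding ev_def using summable_norm_cancel[OF l1_summable_s[OF assms]]
  by (simp add: summable_sums)

lemma l1_mult:
  assumes "l1 f" "l1 g"
  shows "l1 (f * g)"
proof -
  have a: "summable (\<lambda>k. norm (norm (f $ k)))" "summable (\<lambda>k. norm (norm (g $ k)))"
    using assms by (auto simp: l1_def)
  have "summable (\<lambda>k. \<Sum>i\<le>k. norm (f $ i) * norm (g $ (k - i)))"
    by (rule summable_Cauchy_product[OF a])
  then show ?thesis
    unfolding l1_def
  proof (rule summable_comparison_test[rotated])
    show "\<exists>N. \<forall>n\<ge>N. norm (norm ((f * g) $ n)) \<le> (\<Sum>i\<le>n. norm (f $ i) * norm (g $ (n - i)))"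
      by (auto simp: fps_mult_nth atLeast0AtMost norm_mult[symmetric] intro!: norm_sum)
  qed
qed

lemma ev_mult:
  assumes "l1 f" "l1 g" "norm s \<le> 1"
  shows "ev (f * g) s = ev f s * ev g s"
proof -
  have "ev f s * ev g s = (\<Sum>k. \<Sum>i\<le>k. (f $ i * s ^ i) * (g $ (k - i) * s ^ (k - i)))"
    unfolding ev_def
    by (rule Cauchy_product[OF l1_summable_s[OF assms(1,3)] l1_summable_s[OF assms(2,3)]])
  also have "\<dots> = (\<Sum>k. (f * g) $ k * s ^ k)"
  proof (rule suminf_cong)
    fix k
    have "(\<Sum>i\<le>k. (f $ i * s ^ i) * (g $ (k - i) * s ^ (k - i))) = (\<Sum>i\<le>k. f $ i * g $ (k - i) * s ^ k)"
      by (rule sum.cong) (auto simp: power_add[symmetric])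
    then show "(\<Sum>i\<le>k. (f $ i * s ^ i) * (g $ (k - i) * s ^ (k - i))) = (f * g) $ k * s ^ k"
      by (simp add: fps_mult_nth atLeast0AtMost sum_distrib_right)
  qed
  finally show ?thesis unfolding ev_def by simp
qed

lemma l1_add: "l1 f \<Longrightarrow> l1 g \<Longrightarrow> l1 (f + g)"
  unfolding l1_def
proof -
  assume a: "summable (\<lambda>n. norm (f $ n))" "summable (\<lambda>n. norm (g $ n))"
  show "summable (\<lambda>n. norm ((f + g) $ n))"
    by (rule summable_comparison_test[OF _ summable_add[OF a]]) (auto intro: norm_triangle_ineq)
qed

lemma ev_add: "l1 f \<Longrightarrow> l1 g \<Longrightarrow> norm s \<le> 1 \<Longrightarrow> ev (f + g) s = ev f s + ev g s"
  using sums_add[OF ev_sums ev_sums, of f s g s] 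
  by (auto simp: ev_def distrib_right intro!: sums_unique[symmetric])

lemma l1_uminus: "l1 f \<Longrightarrow> l1 (- f)"
  by (simp add: l1_def)

lemma ev_uminus: "l1 f \<Longrightarrow> norm s \<le> 1 \<Longrightarrow> ev (- f) s = - ev f s"
  by (simp add: ev_def suminf_minus[OF summable_norm_cancel[OF l1_summable_s]])

lemma l1_diff: "l1 f \<Longrightarrow> l1 g \<Longrightarrow> l1 (f - g)"
  using l1_add[of f "-g"] l1_uminus[of g] by simp

lemma ev_diff: "l1 f \<Longrightarrow> l1 g \<Longrightarrow> norm s \<le> 1 \<Longrightarrow> ev (f - g) s = ev f s - ev g s"
  using ev_add[of f "-g" s] ev_uminus[of g s] l1_uminus[of g] by simp

lemma l1_finite: "(\<And>n. n > N \<Longrightarrow> f $ n = 0) \<Longrightarrow> l1 f"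
  unfolding l1_def
  by (rule summable_finite[of "{..N}"]) auto

lemma ev_finite: "(\<And>n. n > N \<Longrightarrow> f $ n = 0) \<Longrightarrow> ev f s = (\<Sum>n\<le>N. f $ n * s ^ n)"
  unfolding ev_def by (rule suminf_finite) auto

lemma l1_const: "l1 (fps_const c)"
  by (rule l1_finite[of 0]) auto

lemma ev_const: "ev (fps_const c) s = c"
  by (subst ev_finite[of 0]) auto

lemma l1_one: "l1 1" using l1_const[of 1] by simp
lemma ev_one: "ev 1 s = 1" using ev_const[of 1] by simp

lemma l1_X: "l1 fps_X"
  by (rule l1_finite[of 1]) auto

lemma ev_X: "ev fps_X s = s"
  by (subst ev_finite[of 1]) auto

lemma l1_power: "l1 f \<Longrightarrow> l1 (f ^ n)"
  by (induction n) (auto intro: l1_mult l1_one)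

lemma ev_power: "l1 f \<Longrightarrow> norm s \<le> 1 \<Longrightarrow> ev (f ^ n) s = ev f s ^ n"
  by (induction n) (auto simp: ev_mult l1_power ev_one)


definition hc :: "nat \<Rightarrow> real" where "hc n = (1/2::real) gchoose n"

lemma hc_Suc: "hc (Suc n) = (1/2 - real n) * hc n / (real n + 1)"
  using gbinomial_mult_1[of "1/2::real" n] unfolding hc_def
  by (simp add: field_simps)

fun uu :: "nat \<Rightarrow> real" where
  "uu 0 = 1"
| "uu (Suc n) = uu n * (2 * real n + 1) / (2 * real n + 2)"

lemma uu_nonneg: "uu n \<ge> 0"
  by (induction n) auto

lemma hc_abs: "\<bar>hc (Suc n)\<bar> = uu n / (2 * real n + 2)"
proof (induction n)
  case 0
  then show ?case by (simp add: hc_Suc hc_def)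
next
  case (Suc n)
  have "\<bar>hc (Suc (Suc n))\<bar> = \<bar>1/2 - real (Suc n)\<bar> * \<bar>hc (Suc n)\<bar> / (real (Suc n) + 1)"
    by (simp add: hc_Suc[of "Suc n"] abs_mult abs_divide)
  also have "\<bar>1/2 - real (Suc n)\<bar> = real n + 1/2" by simp
  finally show ?case using Suc by (simp add: field_simps)
qed

lemma hc_abs': "\<bar>hc (Suc n)\<bar> = uu n - uu (Suc n)"
  using hc_abs[of n] by (simp add: field_simps)

lemma hc_partial: "(\<Sum>k\<le>n. \<bar>hc k\<bar>) = 2 - uu n"
proof (induction n)
  case 0
  then show ?case by (simp add: hc_def)
next
  case (Suc n)
  then show ?case by (simp add: hc_abs')
qed

lemma summable_hc: "summable (\<lambda>n. \<bar>hc n\<bar>)"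
  by (rule bounded_imp_summable[of _ 2]) (auto simp: hc_partial uu_nonneg)

lemma of_real_gchoose: "of_real (a gchoose n) = (of_real a :: complex) gchoose n"
  by (simp add: gbinomial_pochhammer pochhammer_of_real[symmetric])

definition sc :: "complex \<Rightarrow> complex fps \<Rightarrow> complex fps" where
  "sc a f = Abs_fps (\<lambda>n. a ^ n * f $ n)"

lemma sc_mult: "sc a (f * g) = sc a f * sc a g"
proof (rule fps_ext)
  fix n
  have "(\<Sum>i=0..n. a ^ n * (f $ i * g $ (n - i))) = (\<Sum>i=0..n. a ^ i * f $ i * (a ^ (n - i) * g $ (n - i)))"
    by (rule sum.cong) (auto simp: power_add[symmetric])
  then show "sc a (f * g) $ n = (sc a f * sc a g) $ n"
    by (simp add: sc_def fps_mult_nth sum_distrib_left)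
qed

definition sig :: "complex \<Rightarrow> complex fps" where
  "sig w = Abs_fps (\<lambda>n. of_real (hc n) * (- w) ^ n)"

lemma sig_sc: "sig w = sc (- w) (fps_binomial (1/2))"
  by (rule fps_ext) (simp add: sig_def sc_def hc_def of_real_gchoose)

lemma sig_sq: "sig w * sig w = 1 - fps_const w * fps_X"
proof -
  have "sig w * sig w = sc (- w) (fps_binomial (1/2) * fps_binomial (1/2))"
    by (simp add: sig_sc sc_mult)
  also have "fps_binomial (1/2) * fps_binomial (1/2) = fps_binomial (1::complex)"
    by (simp add: fps_binomial_add_mult[symmetric])
  also have "sc (- w) (fps_binomial 1) = 1 - fps_const w * fps_X"
    apply (rule fps_ext)
    subgoal for n by (cases n) (auto simp: sc_def fps_binomial_1)
    done
  finally show ?thesis .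
qed

lemma sig_0: "sig w $ 0 = 1"
  by (simp add: sig_def hc_def)

lemma l1_sig: "norm w = 1 \<Longrightarrow> l1 (sig w)"
  unfolding l1_def sig_def using summable_hc by (simp add: norm_mult norm_power)

lemma ev_sig_cnj:
  assumes "norm w = 1" "\<bar>r\<bar> \<le> 1"
  shows "ev (sig (cnj w)) (of_real r) = cnj (ev (sig w) (of_real r))"
proof -
  have n: "norm (cnj w) = 1" using assms by simp
  have "(\<lambda>n. sig w $ n * of_real r ^ n) sums ev (sig w) (of_real r)"
    by (rule ev_sums) (use assms l1_sig in auto)
  then have "(\<lambda>n. cnj (sig w $ n * of_real r ^ n)) sums cnj (ev (sig w) (of_real r))"
    by (simp only: sums_cnj)
  moreover have "(\<lambda>n. cnj (sig w $ n * of_real r ^ n)) = (\<lambda>n. sig (cnj w) $ n * of_real r ^ n)"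
    by (simp add: sig_def)
  ultimately show ?thesis using ev_sums[OF l1_sig[OF n], of "of_real r"] assms(2)
    by (auto dest: sums_unique2)
qed


lemma quad4:
  fixes a b c d qq x::"'a::comm_ring_1"
  assumes "a + b = qq" " a*b = 1" "c + d = -qq" "c*d = 1"
  shows "(1 - a*x)*(1-b*x)*(1-c*x)*(1-d*x) = 1 + (2 - qq*qq)*x^2 + x^4"
proof -
  have e1: "(1 - a*x)*(1-b*x) = 1 - (a+b)*x + (a*b)*x^2" by (simp add: algebra_simps power2_eq_square)
  have e2: "(1 - c*x)*(1-d*x) = 1 - (c+d)*x + (c*d)*x^2" by (simp add: algebra_simps power2_eq_square)
  have "(1 - a*x)*(1-b*x)*(1-c*x)*(1-d*x) = ((1 - a*x)*(1-b*x))*((1-c*x)*(1-d*x))" by (simp add: ac_simps)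
  also have "\<dots> = (1 - qq*x + x^2)*(1 + qq*x + x^2)" unfolding e1 e2 assms by simp
  also have "\<dots> = 1 + (2 - qq*qq)*x^2 + x^4" by (simp add: algebra_simps power2_eq_square power4_eq_xxxx)
  finally show ?thesis .
qed

lemma quadab:
  fixes Q X r :: "'a::comm_ring_1"
  shows "(1 + X^2 - 2*Q*X*r)*(1 + X^2 - 2*Q*X*r) - (1 + (2 - 4*Q*Q)*X^2 + X^4) = (4*Q*X)*(X*Q*r^2 + X*Q - (1+X^2)*r)"
  by (simp add: algebra_simps power2_eq_square power4_eq_xxxx)

locale pq =
  fixes p q :: real
  assumes p_pos: "0 < p" and p_lt: "p < 1" and q_pos: "0 < q" and pq1: "p^2 + q^2 = 1"
begin

definition "w1 = Complex q p"
definition "w3 = Complex (-q) p"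
definition "SS = sig w1 * sig (cnj w1) * sig w3 * sig (cnj w3)"

lemma nw1: "norm w1 = 1" and nw3: "norm w3 = 1"
  using pq1 by (simp_all add: w1_def w3_def cmod_def power2_eq_square)

lemma l1_SS: "l1 SS"
  unfolding SS_def using nw1 nw3 by (intro l1_mult l1_sig) auto

lemma SS_0: "SS $ 0 = 1"
  by (simp add: SS_def sig_0)

lemma SS_sq: "SS * SS = 1 + fps_const (2 - 4 * q^2) * fps_X^2 + fps_X^4"
proof -
  have "SS * SS = (sig w1 * sig w1) * (sig (cnj w1) * sig (cnj w1)) * (sig w3 * sig w3) * (sig (cnj w3) * sig (cnj w3))"
    by (simp add: SS_def ac_simps)
  also have "\<dots> = (1 - fps_const w1 * fps_X) * (1 - fps_const (cnj w1) * fps_X) * (1 - fps_const w3 * fps_X) * (1 - fps_const (cnj w3) * fps_X)"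
    by (simp add: sig_sq)
  also have "\<dots> = 1 + fps_const (2 - 4 * q^2) * fps_X^2 + fps_X^4"
  proof -
    have h1: "fps_const w1 + fps_const (cnj w1) = fps_const (2 * q)"
      by (simp add: w1_def complex_eq_iff)
    have h2: "fps_const w1 * fps_const (cnj w1) = 1"
      using pq1 by (simp add: w1_def complex_eq_iff power2_eq_square)
    have h3: "fps_const w3 + fps_const (cnj w3) = - fps_const (2 * q)"
      by (simp add: w3_def complex_eq_iff)
    have h4: "fps_const w3 * fps_const (cnj w3) = 1"
      using pq1 by (simp add: w3_def complex_eq_iff power2_eq_square)
    have h5: "fps_const (complex_of_real (2 - 4 * q^2)) = 2 - fps_const (2 * q) * fps_const (2 * q)"
      by (simp add: power2_eq_square numeral_fps_const)
    show ?thesis unfolding h5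
      by (rule quad4[OF h1 h2 h3 h4])
  qed
  finally show ?thesis .
qed

lemma ev_SS_real:
  assumes "\<bar>r\<bar> \<le> 1"
  shows "ev SS (of_real r) = of_real ((norm (ev (sig w1) (of_real r)))^2 * (norm (ev (sig w3) (of_real r)))^2)"
proof -
  have n: "norm (complex_of_real r) \<le> 1" using assms by simp
  have "ev SS (of_real r) = ev (sig w1) r * ev (sig (cnj w1)) r * ev (sig w3) r * ev (sig (cnj w3)) r"
    unfolding SS_def using nw1 nw3 n
    by (simp add: ev_mult l1_mult l1_sig)
  also have "\<dots> = (ev (sig w1) r * cnj (ev (sig w1) r)) * (ev (sig w3) r * cnj (ev (sig w3) r))"
    using ev_sig_cnj[OF nw1 assms] ev_sig_cnj[OF nw3 assms] by simp
  also have "\<dots> = of_real ((norm (ev (sig w1) (of_real r)))^2 * (norm (ev (sig w3) (of_real r)))^2)"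
    by (simp only: complex_norm_square[symmetric] of_real_mult)
  finally show ?thesis .
qed

lemma ev_SS:
  assumes "r = 1 \<or> r = -1"
  shows "ev SS (of_real r) = 2 * p"
proof -
  have r: "\<bar>r\<bar> \<le> 1" "norm (complex_of_real r) \<le> 1" using assms by auto
  define t where "t = (norm (ev (sig w1) (of_real r)))^2 * (norm (ev (sig w3) (of_real r)))^2"
  have t: "ev SS (of_real r) = of_real t" "t \<ge> 0"
    unfolding t_def by (rule ev_SS_real[OF r(1)]) simp
  have "ev (SS * SS) (of_real r) = ev (1 + fps_const (2 - 4 * q^2) * fps_X^2 + fps_X^4) (of_real r)"
    by (simp only: SS_sq)
  also have "\<dots> = 1 + (2 - 4 * q^2) * r^2 + r^4"
    using r by (simp add: ev_add ev_mult ev_power ev_X ev_const ev_one l1_add l1_mult l1_power l1_X l1_const l1_one)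
  also have "\<dots> = complex_of_real ((2 * p)^2)"
  proof -
    have R: "(1::real) + (2 - 4*q^2)*r^2 + r^4 = (2*p)^2"
      using assms pq1 by (auto simp: algebra_simps power2_eq_square)
    show ?thesis using arg_cong[OF R, of complex_of_real] by simp
  qed
  finally have tt: "t^2 = (2 * p)^2"
    using ev_mult[OF l1_SS l1_SS r(2)] t by (simp add: power2_eq_square flip: of_real_mult)
  have "t = 2 * p" using power2_eq_iff_nonneg[of t "2*p"] t(2) p_pos tt
    by linarith
  then show ?thesis using t by simp
qed

definition "TT = 1 + fps_X^2 - SS"
definition "rho = Abs_fps (\<lambda>n. TT $ Suc n / (2 * q))"

lemma l1_TT: "l1 TT"
  unfolding TT_def by (intro l1_diff l1_add l1_one l1_power l1_X l1_SS)

lemma TT_rho: "fps_const (2 * q) * fps_X * rho = TT"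
proof (rule fps_ext)
  fix n
  show "(fps_const (2 * q) * fps_X * rho) $ n = TT $ n"
  proof (cases n)
    case 0
    then show ?thesis by (simp add: TT_def SS_0)
  next
    case (Suc m)
    then show ?thesis using q_pos by (simp add: rho_def mult.assoc)
  qed
qed

lemma l1_rho: "l1 rho"
proof -
  have "summable (\<lambda>n. norm (TT $ Suc n))"
    using l1_TT unfolding l1_def by (subst summable_Suc_iff)
  then show ?thesis unfolding l1_def rho_def
    by (auto simp: norm_divide intro: summable_divide)
qed

lemma mult_nth_1: "(f * g) $ 1 = f $ 0 * g $ 1 + f $ 1 * (g $ 0 :: complex)"
  by (simp add: fps_mult_nth)

lemma sig_1: "sig w $ Suc 0 = - w / 2"
  by (simp add: sig_def hc_def)

lemma SS_1: "SS $ Suc 0 = 0"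
  by (simp add: SS_def mult_nth_1 sig_0 sig_1 w1_def w3_def complex_eq_iff)

lemma rho_0: "rho $ 0 = 0"
  by (simp add: rho_def TT_def SS_1)

lemma ev_rho:
  assumes "r = 1 \<or> r = -1"
  shows "ev rho (of_real r) = of_real (r * (1 - p) / q)"
proof -
  have n: "norm (complex_of_real r) \<le> 1" using assms by auto
  have "ev (fps_const (2 * q) * fps_X * rho) r = ev TT r" by (simp only: TT_rho)
  then have "2 * q * r * ev rho r = 1 + r^2 - 2 * p"
    using n ev_SS[OF assms]
    by (simp add: TT_def ev_mult ev_add ev_diff ev_power ev_X ev_const ev_one l1_add l1_mult l1_power l1_X l1_const l1_one l1_rho l1_SS)
  then have "ev rho r * complex_of_real (2 * q * r) = complex_of_real (1 + r^2 - 2 * p)"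
    by (simp add: ac_simps)
  moreover have "complex_of_real (2 * q * r) \<noteq> 0" using assms q_pos by auto
  ultimately have "ev rho r = complex_of_real (1 + r^2 - 2 * p) / complex_of_real (2 * q * r)"
    by (simp add: eq_divide_eq)
  also have "\<dots> = complex_of_real ((1 + r^2 - 2 * p) / (2 * q * r))" by simp
  also have "(1 + r^2 - 2 * p) / (2 * q * r) = r * (1 - p) / q"
    using assms q_pos by (auto simp: field_simps)
  finally show ?thesis .
qed

lemma rho_quad: "fps_X * fps_const q * rho^2 + fps_X * fps_const q = (1 + fps_X^2) * rho"
proof -
  let ?Q = "fps_const (complex_of_real q)"
  have T: "fps_const 2 * ?Q * fps_X * rho = 1 + fps_X^2 - SS"
    using TT_rho by (simp add: TT_def)
  have S2: "SS * SS = 1 + (2 - 4 * ?Q * ?Q) * fps_X^2 + fps_X^4"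
    using SS_sq by (simp add: power2_eq_square numeral_fps_const)
  have "(fps_const 4 * ?Q * fps_X) * (fps_X * ?Q * rho^2 + fps_X * ?Q - (1 + fps_X^2) * rho) = 0"
  proof -
    have "SS = 1 + fps_X^2 - 2 * ?Q * fps_X * rho" using T by (simp add: numeral_fps_const)
    then show ?thesis using S2 quadab[of fps_X ?Q rho]
      by (simp add: numeral_fps_const)
  qed
  moreover have "fps_const 4 * ?Q * fps_X \<noteq> 0" using q_pos by simp
  ultimately show ?thesis by simp
qed

end


lemma L0ab:
  fixes x r Ev Q P Pi e Ki :: "'a::comm_ring_1"
  assumes H1: "Ev*(1 - x*x) = 1" and H2: "x*Q*(r*r) + x*Q - (1+x*x)*r = 0" and H3: "e*e = 1"
    and H4: "P*P + Q*Q = 1" and H5: "P*Pi = 1" and H6: "(1 - e*P)*Ki = 1"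
  shows "(1 - Q*Ki*x*r)*Ev = 1 + x*((-P)*(e*x*((1 - Q*Ki*x*r)*Ev)) + Q*(e*Pi*((1 - Q*Ki*x*r)*Ev)*(r - Q*x)))"
proof -
  define F where "F = (1 - Q*Ki*x*r)*Ev"
  define D where "D = F - (1 + x*((-P)*(e*x*F) + Q*(e*Pi*F*(r - Q*x))))"
  have "P*D = F*(P - e*x*Q*r + e*x*x) - P + e*x*x*F*(P*P + Q*Q - 1) + (P*Pi - 1)*(- e*x*Q*F*r + e*x*x*Q*Q*F)"
    unfolding D_def by (simp add: algebra_simps)
  then have PD: "P*D = F*(P - e*x*Q*r + e*x*x) - P" using H4 H5 by simp
  have F2: "(1 - e*P)*(1 - x*x)*F = (1 - e*P) - Q*x*r"
  proof -
    have "(1 - e*P)*(1 - x*x)*F = (1 - e*P)*(1 - Q*Ki*x*r)*(Ev*(1 - x*x))"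
      unfolding F_def by (simp add: ac_simps)
    also have "\<dots> = (1 - e*P)*(1 - Q*Ki*x*r)"
      using H1 by simp
    also have "\<dots> = (1 - e*P) - ((1 - e*P)*Ki)*Q*x*r"
      by (simp add: algebra_simps)
    finally show ?thesis using H6 by simp
  qed
  have id3: "((1 - e*P) - Q*x*r)*(P - e*Q*x*r + e*x*x) - P*(1 - e*P)*(1 - x*x)
     = (e*e - 1)*P*Q*x*r - (e*e - 1)*P*x*x + e*Q*x*(x*Q*(r*r) + x*Q - (1+x*x)*r) + e*x*x*(1 - P*P - Q*Q)"
    by (simp add: algebra_simps)
  have z: "((1 - e*P) - Q*x*r)*(P - e*Q*x*r + e*x*x) - P*(1 - e*P)*(1 - x*x) = 0"
    unfolding id3 using H2 H3 H4 by (simp add: algebra_simps)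
  have "(1 - e*P)*(1 - x*x)*(P*D) = ((1 - e*P)*(1 - x*x)*F)*(P - e*x*Q*r + e*x*x) - P*(1 - e*P)*(1 - x*x)"
    unfolding PD by (simp add: algebra_simps)
  also have "\<dots> = 0" unfolding F2 using z by (simp add: ac_simps)
  finally have z2: "(1 - e*P)*(1 - x*x)*(P*D) = 0" .
  have "D = (P*Pi)*((1 - e*P)*Ki)*(Ev*(1 - x*x))*D" using H1 H5 H6 by simp
  also have "\<dots> = (Pi*Ki*Ev)*((1 - e*P)*(1 - x*x)*(P*D))" by (simp add: ac_simps)
  also have "\<dots> = 0" using z2 by simp
  finally show ?thesis unfolding D_def F_def by simp
qed

lemma Lyab:
  fixes x r F Q P Pi e m :: "'a::comm_ring_1"
  assumes H2: "x*Q*(r*r) + x*Q - (1+x*x)*r = 0"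
    and H4: "P*P + Q*Q = 1" and H5: "P*Pi = 1"
  shows "e*Pi*F*(r - Q*x)*m = x*((-P)*(e*x*F*(r*m)) + Q*(e*Pi*F*(r - Q*x)*(r*m)))"
proof -
  define D where "D = e*Pi*F*(r - Q*x)*m - x*((-P)*(e*x*F*(r*m)) + Q*(e*Pi*F*(r - Q*x)*(r*m)))"
  have "P*D = (P*Pi)*(e*F*m*((r - Q*x) - x*Q*(r - Q*x)*r)) + e*F*m*(P*P*x*x*r)"
    unfolding D_def by (simp add: algebra_simps)
  also have "\<dots> = - e*F*m*(x*Q*(r*r) + x*Q - (1+x*x)*r) + e*F*m*x*x*r*(P*P + Q*Q - 1)"
    using H5 by (simp add: algebra_simps)
  also have "\<dots> = 0" using H2 H4 by simp
  finally have "P*D = 0" .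
  then have "D = 0" using H5 by (metis mult.commute mult.left_neutral mult_zero_right mult.assoc)
  then show ?thesis unfolding D_def by simp
qed

lemma Ryab:
  fixes x r F Q P Pi e m :: "'a::comm_ring_1"
  assumes H5: "P*Pi = 1"
  shows "e*x*F*(r*m) = x*(Q*(e*x*F*m) + P*(e*Pi*F*(r - Q*x)*m))"
proof -
  have "x*(Q*(e*x*F*m) + P*(e*Pi*F*(r - Q*x)*m)) = e*x*F*m*(Q*x + (P*Pi)*(r - Q*x))"
    by (simp add: algebra_simps)
  also have "\<dots> = e*x*F*(r*m)" using H5 by (simp add: algebra_simps)
  finally show ?thesis by simp
qed

definition E2 :: "complex fps" where "E2 = Abs_fps (\<lambda>n. if even n then 1 else 0)"

lemma E2_mult: "E2 * (1 - fps_X * fps_X) = 1"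
proof -
  have e: "E2 * (1 - fps_X * fps_X) = E2 - fps_X * (fps_X * E2)" by (simp add: algebra_simps)
  show ?thesis unfolding e
  proof (rule fps_ext)
    fix n
    show "(E2 - fps_X * (fps_X * E2)) $ n = (1::complex fps) $ n"
    proof (cases n)
      case 0 then show ?thesis by (simp add: E2_def)
    next
      case (Suc m)
      then show ?thesis
        by (cases m) (simp_all add: E2_def)
    qed
  qed
qed

context pq
begin

definition "Gf e = 1 - fps_const (complex_of_real q) * fps_const (complex_of_real (1/(1 - e*p))) * fps_X * rho"
definition "KL e y = (if y = 0 then Gf e else
   fps_const (complex_of_real e) * fps_const (complex_of_real (1/p)) * Gf e * (rho - fps_const (complex_of_real q) * fps_X) * rho^(y-1))"
definition "KR e y = (if y = 0 then 0 else fps_const (complex_of_real e) * fps_X * Gf e * rho^(y-1))"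

lemma rho_quad': "fps_X * fps_const (complex_of_real q) * (rho * rho) + fps_X * fps_const (complex_of_real q) - (1 + fps_X * fps_X) * rho = 0"
  using rho_quad by (simp add: power2_eq_square)

lemma cst:
  assumes "e = 1 \<or> e = -1"
  shows "fps_const (complex_of_real e) * fps_const (complex_of_real e) = 1"
    and "fps_const (complex_of_real p) * fps_const (complex_of_real p) + fps_const (complex_of_real q) * fps_const (complex_of_real q) = 1"
    and "fps_const (complex_of_real p) * fps_const (complex_of_real (1/p)) = 1"
    and "(1 - fps_const (complex_of_real e) * fps_const (complex_of_real p)) * fps_const (complex_of_real (1/(1 - e*p))) = 1"
proof -
  show "fps_const (complex_of_real e) * fps_const (complex_of_real e) = 1" using assms by auto
  have h: "complex_of_real p * complex_of_real p + complex_of_real q * complex_of_real q = 1"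
    using arg_cong[OF pq1, of complex_of_real] by (simp add: power2_eq_square)
  show "fps_const (complex_of_real p) * fps_const (complex_of_real p) + fps_const (complex_of_real q) * fps_const (complex_of_real q) = 1"
    by (simp only: fps_const_mult fps_const_add h fps_const_1_eq_1)
  show "fps_const (complex_of_real p) * fps_const (complex_of_real (1/p)) = 1" using p_pos by simp
  have "1 - e * p \<noteq> 0" using assms p_lt p_pos by auto
  then have "(1 - e*p) * (1/(1 - e*p)) = 1" by simp
  from arg_cong[OF this, of complex_of_real]
  have h2: "(1 - complex_of_real e * complex_of_real p) * complex_of_real (1/(1 - e*p)) = 1"
    by (simp only: of_real_mult of_real_diff of_real_1)
  have "(1 - fps_const (complex_of_real e) * fps_const (complex_of_real p)) * fps_const (complex_of_real (1/(1 - e*p)))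
     = fps_const ((1 - complex_of_real e * complex_of_real p) * complex_of_real (1/(1 - e*p)))"
    by (simp only: fps_const_mult fps_const_sub fps_const_1_eq_1[symmetric])
  then show "(1 - fps_const (complex_of_real e) * fps_const (complex_of_real p)) * fps_const (complex_of_real (1/(1 - e*p))) = 1"
    by (simp only: h2 fps_const_1_eq_1)
qed

lemma KR1: "KR e 1 * E2 = fps_const (complex_of_real e) * fps_X * (Gf e * E2)"
  by (simp add: KR_def mult.assoc mult.left_commute)

lemma KRy: "y \<ge> 1 \<Longrightarrow> KR e y * E2 = fps_const (complex_of_real e) * fps_X * (Gf e * E2) * rho^(y-1)"
  by (simp add: KR_def mult.assoc mult.left_commute)

lemma KLy: "y \<ge> 1 \<Longrightarrow> KL e y * E2 = fps_const (complex_of_real e) * fps_const (complex_of_real (1/p)) * (Gf e * E2) * (rho - fps_const (complex_of_real q) * fps_X) * rho^(y-1)"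
  by (simp add: KL_def mult.assoc mult.left_commute)


lemma I3:
  assumes "e = 1 \<or> e = -1"
  shows "KL e 0 * E2 = 1 + fps_X * (fps_const (- complex_of_real p) * (KR e 1 * E2) + fps_const (complex_of_real q) * (KL e 1 * E2))"
proof -
  note g = L0ab[OF E2_mult rho_quad' cst[OF assms], folded Gf_def]
  show ?thesis unfolding KR1 KLy[of 1, OF order_refl]
    using g by (simp add: KL_def)
qed

lemma I4:
  assumes "e = 1 \<or> e = -1" "y \<ge> 1"
  shows "KL e y * E2 = fps_X * (fps_const (- complex_of_real p) * (KR e (y+1) * E2) + fps_const (complex_of_real q) * (KL e (y+1) * E2))"
proof -
  have r: "rho ^ (y + 1 - 1) = rho * rho ^ (y - 1)" using assms(2) by (cases y) auto
  note g = Lyab[OF rho_quad' cst(2,3)[OF assms(1)], of "fps_const (complex_of_real e)" "Gf e * E2" "rho^(y-1)"]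
  have a: "1 \<le> y + 1" by simp
  show ?thesis unfolding KRy[OF a] KLy[OF a] KLy[OF assms(2)] r
    using g by simp
qed

lemma I2:
  assumes "y \<ge> 2"
  shows "KR e y * E2 = fps_X * (fps_const (complex_of_real q) * (KR e (y-1) * E2) + fps_const (complex_of_real p) * (KL e (y-1) * E2))"
proof -
  have s: "Suc (y - 1 - 1) = y - 1" using assms by arith
  have r: "rho ^ (y - 1) = rho * rho ^ (y - 1 - 1)" by (metis power_Suc s)
  note g = Ryab[OF cst(3)[of 1], where x=fps_X and r=rho and F="Gf e * E2" and Q="fps_const (complex_of_real q)" and e="fps_const (complex_of_real e)" and m="rho^(y-1-1)"]
  have y1: "y - 1 \<ge> 1" using assms by simp
  have y2: "y \<ge> 1" using assms by simp
  show ?thesis unfolding KRy[OF y1] KLy[OF y1] KRy[OF y2] r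
    using g assms by simp
qed

lemma I1: "KR e 1 * E2 = fps_X * (fps_const (complex_of_real e) * (KL e 0 * E2))"
  by (simp add: KL_def KR_def ac_simps)

end

context pq begin

lemma KR_0: "(KR e y * E2) $ 0 = 0"
  by (simp add: KR_def)

lemma KL_0: "(KL e y * E2) $ 0 = (if y = 0 then 1 else 0)"
  by (simp add: KL_def Gf_def E2_def rho_0)

lemma walk_fps:
  assumes e: "e = 1 \<or> e = -1" and g: "exp (\<i> * complex_of_real \<gamma>) = complex_of_real e"
  shows "qw2_state (of_real q) (- of_real p) (of_real p) (of_real q) \<gamma> t = ((\<lambda>y. (KR e y * E2) $ t), (\<lambda>y. (KL e y * E2) $ t))"
proof (induction t)
  case 0
  show ?case unfolding qw2_state_def qw2_init_def funpow_0 KR_0 KL_0 by (simp add: fun_eq_iff)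
next
  case (Suc t)
  have st: "qw2_state (of_real q) (- of_real p) (of_real p) (of_real q) \<gamma> (Suc t)
    = qw2_step (of_real q) (- of_real p) (of_real p) (of_real q) \<gamma> (qw2_state (of_real q) (- of_real p) (of_real p) (of_real q) \<gamma> t)"
    by (simp add: qw2_state_def)
  show ?case unfolding st Suc qw2_step_def Let_def fst_conv snd_conv
  proof (intro prod_eqI; simp only: fst_conv snd_conv; rule ext)
    fix y
    show "(if y = 0 then 0 else if y = 1 then exp (\<i> * complex_of_real \<gamma>) * (KL e 0 * E2) $ t
          else complex_of_real q * (KR e (y - 1) * E2) $ t + complex_of_real p * (KL e (y - 1) * E2) $ t) =
         (KR e y * E2) $ Suc t"
    proof (cases "y = 0")
      case True then show ?thesis by (simp add: KR_def)
    next
      case False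
      show ?thesis
      proof (cases "y = 1")
        case True
        have "(KR e 1 * E2) $ Suc t = complex_of_real e * (KL e 0 * E2) $ t"
          unfolding I1 by simp
        then show ?thesis using True by (simp add: g)
      next
        case False
        then have "y \<ge> 2" using \<open>y \<noteq> 0\<close> by simp
        then show ?thesis using False \<open>y \<noteq> 0\<close> by (simp add: I2[of y e])
      qed
    qed
  next
    fix y
    show "- complex_of_real p * (KR e (y + 1) * E2) $ t + complex_of_real q * (KL e (y + 1) * E2) $ t =
         (KL e y * E2) $ Suc t"
    proof (cases "y = 0")
      case True then show ?thesis by (simp add: I3[OF e])
    next
      case False
      then show ?thesis by (simp add: I4[OF e, of y])
    qed
  qed
qed

end

lemma E2_nth: "E2 $ n = (1 + (-1) ^ n) / 2"
  by (simp add: E2_def)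

lemma limE2:
  assumes K: "l1 K"
  shows "(\<lambda>n. (K * E2) $ n - (ev K 1 + (-1) ^ n * ev K (-1)) / 2) \<longlonglongrightarrow> 0"
proof -
  define A where "A n = (\<Sum>i\<le>n. K $ i)" for n
  define B where "B n = (\<Sum>i\<le>n. K $ i * (-1) ^ i)" for n
  have eq: "(K * E2) $ n = (A n + (-1) ^ n * B n) / 2" for n
  proof -
    have "(K * E2) $ n = (\<Sum>i\<le>n. K $ i * ((1 + (-1) ^ (n - i)) / 2))"
      by (simp add: fps_mult_nth atLeast0AtMost E2_nth)
    also have "\<dots> = (\<Sum>i\<le>n. (K $ i + (-1) ^ n * (K $ i * (-1) ^ i)) / 2)"
    proof (rule sum.cong[OF refl])
      fix i assume "i \<in> {..n}"
      then have "(-1::complex) ^ (n - i) = (-1) ^ n * (-1) ^ i"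
      proof -
        assume "i \<in> {..n}"
        then have "n = (n - i) + i" by simp
        then have "(-1::complex) ^ n = (-1) ^ (n - i) * (-1) ^ i" by (metis power_add)
        then have "(-1::complex) ^ n * (-1) ^ i = (-1) ^ (n - i) * ((-1) ^ i * (-1) ^ i)" by (simp add: ac_simps)
        then show ?thesis by (simp add: power_mult_distrib[symmetric])
      qed
      then show "K $ i * ((1 + (-1) ^ (n - i)) / 2) = (K $ i + (-1) ^ n * (K $ i * (-1) ^ i)) / 2"
        by (simp add: algebra_simps)
    qed
    also have "\<dots> = (A n + (-1) ^ n * B n) / 2"
      by (simp add: A_def B_def sum_divide_distrib[symmetric] sum.distrib sum_distrib_left)
    finally show ?thesis .
  qed
  have "(\<lambda>n. K $ n * 1 ^ n) sums ev K 1" by (rule ev_sums[OF K]) simp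
  then have hA: "A \<longlonglongrightarrow> ev K 1" unfolding sums_def_le A_def by simp
  have "(\<lambda>n. K $ n * (-1) ^ n) sums ev K (-1)" by (rule ev_sums[OF K]) simp
  then have hB: "B \<longlonglongrightarrow> ev K (-1)" unfolding sums_def_le B_def by simp
  have 1: "(\<lambda>n. A n - ev K 1) \<longlonglongrightarrow> 0" using hA by (simp add: LIM_zero)
  have "(\<lambda>n. B n - ev K (-1)) \<longlonglongrightarrow> 0" using hB by (simp add: LIM_zero)
  then have 2: "(\<lambda>n. (-1) ^ n * (B n - ev K (-1))) \<longlonglongrightarrow> 0"
    by (subst tendsto_norm_zero_iff[symmetric]) (simp add: norm_mult norm_power tendsto_norm_zero)
  have "(\<lambda>n. ((A n - ev K 1) + (-1) ^ n * (B n - ev K (-1))) / 2) \<longlonglongrightarrow> (0 + 0) / 2"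
    by (intro tendsto_intros 1 2) simp
  then show ?thesis by (simp add: eq algebra_simps diff_divide_distrib add_divide_distrib)
qed

lemma sqdiff:
  fixes a b :: "nat \<Rightarrow> complex"
  assumes "(\<lambda>n. a n - b n) \<longlonglongrightarrow> 0" and "\<And>n. norm (b n) \<le> B"
  shows "(\<lambda>n. (norm (a n))^2 - (norm (b n))^2) \<longlonglongrightarrow> 0"
proof (rule Lim_null_comparison)
  have n: "(\<lambda>n. norm (a n - b n)) \<longlonglongrightarrow> 0" using assms(1) by (simp add: tendsto_norm_zero)
  have "(\<lambda>n. norm (a n - b n) * (norm (a n - b n) + 2 * B)) \<longlonglongrightarrow> 0 * (0 + 2 * B)"
    by (intro tendsto_intros n)
  then show "(\<lambda>n. norm (a n - b n) * (norm (a n - b n) + 2 * B)) \<longlonglongrightarrow> 0" by simp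
  show "\<forall>\<^sub>F n in sequentially. norm ((norm (a n))^2 - (norm (b n))^2) \<le> norm (a n - b n) * (norm (a n - b n) + 2 * B)"
  proof (rule always_eventually, rule allI)
    fix n
    have t1: "\<bar>norm (a n) - norm (b n)\<bar> \<le> norm (a n - b n)" by (rule norm_triangle_ineq3)
    have t2: "norm (a n) + norm (b n) \<le> norm (a n - b n) + 2 * B"
      using norm_triangle_ineq2[of "a n" "b n"] assms(2)[of n] by linarith
    have "(norm (a n))^2 - (norm (b n))^2 = (norm (a n) - norm (b n)) * (norm (a n) + norm (b n))"
      by (simp add: power2_eq_square algebra_simps)
    then have "norm ((norm (a n))^2 - (norm (b n))^2) = \<bar>norm (a n) - norm (b n)\<bar> * \<bar>norm (a n) + norm (b n)\<bar>"
      by (simp add: abs_mult)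
    also have "\<bar>norm (a n) + norm (b n)\<bar> = norm (a n) + norm (b n)" by simp
    finally have "norm ((norm (a n))^2 - (norm (b n))^2) = \<bar>norm (a n) - norm (b n)\<bar> * (norm (a n) + norm (b n))" .
    also have "\<dots> \<le> norm (a n - b n) * (norm (a n - b n) + 2 * B)"
      by (intro mult_mono t1 t2) auto
    finally show "norm ((norm (a n))^2 - (norm (b n))^2) \<le> norm (a n - b n) * (norm (a n - b n) + 2 * B)" .
  qed
qed

context pq begin

definition "rr = (1 - p) / q"
definition "gv e = 1 - (1 - p) / (1 - e * p)"

lemma l1_Gf: "l1 (Gf e)"
  unfolding Gf_def by (intro l1_diff l1_one l1_mult l1_const l1_X l1_rho)

lemma l1_KL: "l1 (KL e y)"
  unfolding KL_def by (auto intro!: l1_diff l1_mult l1_const l1_X l1_rho l1_Gf l1_power)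

lemma l1_zero: "l1 0" by (simp add: l1_def)

lemma l1_KR: "l1 (KR e y)"
  unfolding KR_def by (auto intro!: l1_mult l1_const l1_X l1_rho l1_Gf l1_power l1_zero)

lemma ev_rho': "s = 1 \<or> s = -1 \<Longrightarrow> ev rho (of_real s) = of_real (s * rr)"
  using ev_rho by (simp add: rr_def)

lemma ev_Gf:
  assumes e: "e = 1 \<or> e = -1" and s: "s = 1 \<or> s = -1"
  shows "ev (Gf e) (of_real s) = of_real (gv e)"
proof -
  have n: "norm (complex_of_real s) \<le> 1" using s by auto
  have "ev (Gf e) (of_real s) = 1 - of_real q * of_real (1 / (1 - e * p)) * of_real s * of_real (s * rr)"
    unfolding Gf_def using n
    by (simp add: ev_diff ev_mult ev_const ev_X ev_one ev_rho'[OF s] l1_mult l1_const l1_X l1_rho l1_one l1_diff)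
  also have "\<dots> = of_real (1 - q * (1 / (1 - e * p)) * (s * s) * rr)" by (simp add: algebra_simps)
  also have "1 - q * (1 / (1 - e * p)) * (s * s) * rr = gv e"
    using s q_pos by (auto simp: rr_def gv_def)
  finally show ?thesis .
qed

lemma rr_q: "rr - q = - p * rr"
proof -
  have "q^2 = 1 - p^2" using pq1 by simp
  then show ?thesis using q_pos by (simp add: rr_def field_simps power2_eq_square)
qed

lemma ev_KL:
  assumes e: "e = 1 \<or> e = -1" and s: "s = 1 \<or> s = -1" and y: "y \<ge> 1"
  shows "ev (KL e y) (of_real s) = of_real (- e * gv e * s ^ y * rr ^ y)"
proof -
  have n: "norm (complex_of_real s) \<le> 1" using s by auto
  have "ev (KL e y) (of_real s) = of_real e * of_real (1/p) * of_real (gv e) * (of_real (s * rr) - of_real q * of_real s) * of_real (s * rr) ^ (y - 1)"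
    unfolding KL_def using n y
    by (simp add: ev_diff ev_mult ev_const ev_X ev_power ev_Gf[OF e s] ev_rho'[OF s] l1_mult l1_const l1_X l1_rho l1_Gf l1_diff l1_power)
  also have "\<dots> = of_real (e * (1/p) * gv e * (s * (rr - q)) * (s * rr) ^ (y - 1))"
    by (simp add: algebra_simps)
  also have "e * (1/p) * gv e * (s * (rr - q)) * (s * rr) ^ (y - 1) = - e * gv e * s ^ y * rr ^ y"
  proof -
    obtain k where yy: "y = Suc k" using y by (cases y) auto
    have "e * (1/p) * gv e * (s * (rr - q)) * (s * rr) ^ (y - 1) = - e * gv e * (s * (s * rr) ^ (y - 1)) * rr"
      unfolding rr_q using p_pos by (simp add: field_simps)
    also have "\<dots> = - e * gv e * s ^ y * rr ^ y"
      unfolding yy by (simp add: power_mult_distrib algebra_simps)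
    finally show ?thesis .
  qed
  finally show ?thesis .
qed

lemma ev_KR:
  assumes e: "e = 1 \<or> e = -1" and s: "s = 1 \<or> s = -1" and y: "y \<ge> 1"
  shows "ev (KR e y) (of_real s) = of_real (e * gv e * s ^ y * rr ^ (y - 1))"
proof -
  have n: "norm (complex_of_real s) \<le> 1" using s by auto
  have "ev (KR e y) (of_real s) = of_real e * of_real s * of_real (gv e) * of_real (s * rr) ^ (y - 1)"
    unfolding KR_def using n y
    by (simp add: ev_mult ev_const ev_X ev_power ev_Gf[OF e s] ev_rho'[OF s] l1_mult l1_const l1_X l1_rho l1_Gf l1_power)
  also have "\<dots> = of_real (e * gv e * (s * s ^ (y - 1)) * rr ^ (y - 1))"
    by (simp add: algebra_simps power_mult_distrib)
  also have "s * s ^ (y - 1) = s ^ y" using y by (metis Suc_diff_1 less_le_trans zero_less_one power_Suc)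
  finally show ?thesis .
qed

lemma ev_KL0:
  assumes e: "e = 1 \<or> e = -1" and s: "s = 1 \<or> s = -1"
  shows "ev (KL e 0) (of_real s) = of_real (gv e)"
  using ev_Gf[OF e s] by (simp add: KL_def)

end

lemma gauge:
  fixes a b c d \<theta> \<mu> q' p' :: complex
  assumes nz: "\<theta> \<noteq> 0" "\<mu> \<noteq> 0" and h: "a = q'*\<theta>*\<mu>" "c = p'" "b = -p'*\<theta>^2" "d = q'*\<theta>/\<mu>"
  shows "qw2_state a b c d \<gamma> t = ((\<lambda>y. \<theta>^t*\<mu>^y/(\<theta>*\<mu>) * fst (qw2_state q' (-p') p' q' \<gamma> t) y),
                                 (\<lambda>y. \<theta>^t*\<mu>^y * snd (qw2_state q' (-p') p' q' \<gamma> t) y))"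
proof (induction t)
  case 0
  show ?case by (auto simp: qw2_state_def qw2_init_def fun_eq_iff)
next
  case (Suc t)
  define R where "R = fst (qw2_state q' (-p') p' q' \<gamma> t)"
  define L where "L = snd (qw2_state q' (-p') p' q' \<gamma> t)"
  have st: "qw2_state a' b' c' d' \<gamma> (Suc t) = qw2_step a' b' c' d' \<gamma> (qw2_state a' b' c' d' \<gamma> t)" for a' b' c' d'
    by (simp add: qw2_state_def)
  have can: "qw2_state q' (-p') p' q' \<gamma> (Suc t) = qw2_step q' (-p') p' q' \<gamma> (R, L)"
    unfolding st R_def L_def by simp
  show ?case unfolding st[of a b c d] can Suc qw2_step_def Let_def fst_conv snd_conv R_def[symmetric] L_def[symmetric]
  proof (intro prod_eqI; simp only: fst_conv snd_conv; rule ext)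
    fix y
    show "(if y = 0 then 0 else if y = 1 then exp (\<i> * complex_of_real \<gamma>) * (\<theta> ^ t * \<mu> ^ 0 * L 0)
          else a * (\<theta> ^ t * \<mu> ^ (y - 1) / (\<theta> * \<mu>) * R (y - 1)) + c * (\<theta> ^ t * \<mu> ^ (y - 1) * L (y - 1))) =
          \<theta> ^ Suc t * \<mu> ^ y / (\<theta> * \<mu>) *
          (if y = 0 then 0 else if y = 1 then exp (\<i> * complex_of_real \<gamma>) * L 0
           else q' * R (y - 1) + p' * L (y - 1))"
    proof (cases y)
      case 0 then show ?thesis by simp
    next
      case (Suc k)
      then show ?thesis using nz unfolding h
        by (cases k) (auto simp: field_simps)
    qed
  next
    fix y
    show "b * (\<theta> ^ t * \<mu> ^ (y + 1) / (\<theta> * \<mu>) * R (y + 1)) + d * (\<theta> ^ t * \<mu> ^ (y + 1) * L (y + 1)) =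
          \<theta> ^ Suc t * \<mu> ^ y * (- p' * R (y + 1) + q' * L (y + 1))"
      using nz unfolding h by (simp add: field_simps power2_eq_square)
  qed
qed


lemma conv_sq:
  assumes "l1 K"
  shows "(\<lambda>t. (norm ((K * E2) $ t))^2 - (norm ((ev K 1 + (-1) ^ t * ev K (-1)) / 2))^2) \<longlonglongrightarrow> 0"
proof (rule sqdiff[OF limE2[OF assms]])
  fix t
  show "norm ((ev K 1 + (-1) ^ t * ev K (-1)) / 2) \<le> (norm (ev K 1) + norm (ev K (-1))) / 2"
    using norm_triangle_ineq[of "ev K 1" "(-1) ^ t * ev K (-1)"]
    by (simp add: norm_divide norm_mult norm_power)
qed

lemma par_val:
  fixes u :: real
  shows "norm ((complex_of_real u + (-1) ^ t * complex_of_real ((-1) ^ x * u)) / 2) ^ 2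
         = (1 + (-1) ^ (t + x)) / 2 * u^2"
proof -
  have "(complex_of_real u + (-1) ^ t * complex_of_real ((-1) ^ x * u)) / 2 = of_real ((1 + (-1) ^ (t + x)) / 2 * u)"
    by (simp add: power_add algebra_simps)
  then have "norm ((complex_of_real u + (-1) ^ t * complex_of_real ((-1) ^ x * u)) / 2) ^ 2
       = (norm (complex_of_real ((1 + (-1) ^ (t + x)) / 2 * u))) ^ 2"
    by (simp only:)
  also have "\<dots> = ((1 + (-1) ^ (t + x)) / 2)^2 * u^2"
    by (simp only: norm_of_real power2_abs power_mult_distrib)
  also have "((1 + (-1::real) ^ (t + x)) / 2)^2 = (1 + (-1) ^ (t + x)) / 2"
    by (cases "even (t + x)") auto
  finally show ?thesis .
qed

context pq begin

lemma main_pq: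
  assumes e: "e = 1 \<or> e = -1" and g: "exp (\<i> * complex_of_real \<gamma>) = complex_of_real e"
  shows "(\<lambda>t. qw2_prob (of_real q) (- of_real p) (of_real p) (of_real q) \<gamma> t x
     - (1 + (-1) ^ (t + x)) / 2 * (if x = 0 then (gv e)^2 else (gv e)^2 * (rr^(2*x) + rr^(2*x-2)))) \<longlonglongrightarrow> 0"
proof -
  have prob: "qw2_prob (of_real q) (- of_real p) (of_real p) (of_real q) \<gamma> t x =
     (if x = 0 then (norm ((KL e 0 * E2) $ t))^2 else (norm ((KR e x * E2) $ t))^2 + (norm ((KL e x * E2) $ t))^2)" for t
    unfolding qw2_prob_def walk_fps[OF e g] Let_def by simp
  show ?thesis
  proof (cases "x = 0")
    case True
    have lv: "(norm ((ev (KL e 0) 1 + (-1) ^ t * ev (KL e 0) (-1)) / 2))^2 = (1 + (-1) ^ (t + x)) / 2 * (gv e)^2" for t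
    proof -
      have a1: "ev (KL e 0) 1 = of_real (gv e)" using ev_KL0[OF e, of 1] by simp
      have a2: "ev (KL e 0) (-1) = of_real ((-1)^0 * gv e)" using ev_KL0[OF e, of "-1"] by simp
      show ?thesis unfolding a1 a2 par_val using True by simp
    qed
    show ?thesis using conv_sq[OF l1_KL[of e 0]] True unfolding prob lv by simp
  next
    case False
    then have x: "x \<ge> 1" by simp
    have lR: "(norm ((ev (KR e x) 1 + (-1) ^ t * ev (KR e x) (-1)) / 2))^2 = (1 + (-1) ^ (t + x)) / 2 * (gv e)^2 * rr^(2*x-2)" for t
    proof -
      have "(norm ((ev (KR e x) 1 + (-1) ^ t * ev (KR e x) (-1)) / 2))^2 = (1 + (-1) ^ (t + x)) / 2 * (e * gv e * rr ^ (x - 1))^2"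
      proof -
        have a1: "ev (KR e x) 1 = of_real (e * gv e * rr ^ (x - 1))" using ev_KR[OF e _ x, of 1] by simp
        have a2: "ev (KR e x) (-1) = of_real ((-1)^x * (e * gv e * rr ^ (x - 1)))"
          using ev_KR[OF e _ x, of "-1"] by (simp add: algebra_simps)
        show ?thesis unfolding a1 a2 par_val by simp
      qed
      also have "(e * gv e * rr ^ (x - 1))^2 = (gv e)^2 * rr^(2*x-2)"
        using e x by (auto simp: power_mult_distrib power_mult[symmetric] mult.commute[of 2] diff_mult_distrib)
      finally show ?thesis by simp
    qed
    have lL: "(norm ((ev (KL e x) 1 + (-1) ^ t * ev (KL e x) (-1)) / 2))^2 = (1 + (-1) ^ (t + x)) / 2 * (gv e)^2 * rr^(2*x)" for t
    proof -
      have "(norm ((ev (KL e x) 1 + (-1) ^ t * ev (KL e x) (-1)) / 2))^2 = (1 + (-1) ^ (t + x)) / 2 * (- e * gv e * rr ^ x)^2"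
      proof -
        have a1: "ev (KL e x) 1 = of_real (- e * gv e * rr ^ x)" using ev_KL[OF e _ x, of 1] by simp
        have a2: "ev (KL e x) (-1) = of_real ((-1)^x * (- e * gv e * rr ^ x))"
          using ev_KL[OF e _ x, of "-1"] by (simp add: algebra_simps)
        show ?thesis unfolding a1 a2 par_val by simp
      qed
      also have "(- e * gv e * rr ^ x)^2 = (gv e)^2 * rr^(2*x)"
        using e by (auto simp: power_mult_distrib power_mult[symmetric] mult.commute[of 2])
      finally show ?thesis by simp
    qed
    have "(\<lambda>t. ((norm ((KR e x * E2) $ t))^2 - (norm ((ev (KR e x) 1 + (-1) ^ t * ev (KR e x) (-1)) / 2))^2)
            + ((norm ((KL e x * E2) $ t))^2 - (norm ((ev (KL e x) 1 + (-1) ^ t * ev (KL e x) (-1)) / 2))^2)) \<longlonglongrightarrow> 0 + 0"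
      by (intro tendsto_add conv_sq l1_KR l1_KL)
    then show ?thesis unfolding prob lR lL using False by (simp add: algebra_simps)
  qed
qed

end

lemma ustruct:
  fixes a b c d :: complex and p :: real
  assumes U: "unitary2 a b c d" and H: "cnj b * det2 a b c d = - complex_of_real p"
    and p: "0 < p" "p < 1"
  shows "\<exists>\<theta> \<mu>. norm \<theta> = 1 \<and> norm \<mu> = 1 \<and> \<theta> \<noteq> 0 \<and> \<mu> \<noteq> 0 \<and>
           a = complex_of_real (sqrt (1 - p^2)) * \<theta> * \<mu> \<and> c = complex_of_real p \<and>
           b = - complex_of_real p * \<theta>^2 \<and> d = complex_of_real (sqrt (1 - p^2)) * \<theta> / \<mu>"
proof -
  define q where "q = sqrt (1 - p^2)"
  have p2: "p^2 < 1" using p by (simp add: power_less_one_iff abs_less_iff)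
  have q: "q > 0" "q^2 = 1 - p^2" using p2 unfolding q_def by auto
  define D where "D = a * d - b * c"
  have U1: "cnj a * a + cnj c * c = 1" and U2: "cnj b * b + cnj d * d = 1"
    and U3: "cnj a * b + cnj c * d = 0" and U4: "cnj b * a + cnj d * c = 0"
    using U by (auto simp: unitary2_def)
  have H': "cnj b * D = - complex_of_real p" using H by (simp add: det2_def D_def)
  have i: "d = cnj a * D"
  proof -
    have "cnj a * D = d * (cnj a * a + cnj c * c) - c * (cnj a * b + cnj c * d)"
      by (simp add: D_def algebra_simps)
    then show ?thesis using U1 U3 by simp
  qed
  have ii: "c = - cnj b * D"
  proof -
    have "- cnj b * D = c * (cnj b * b + cnj d * d) - d * (cnj b * a + cnj d * c)"
      by (simp add: D_def algebra_simps)
    then show ?thesis using U2 U4 by simp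
  qed
  have iii: "D = D * (cnj a * a + cnj b * b)"
  proof -
    have "D = a * d - b * c" by (simp add: D_def)
    also have "\<dots> = a * (cnj a * D) - b * (- cnj b * D)" using i ii by simp
    finally show ?thesis by (simp add: algebra_simps)
  qed
  have Dnz: "D \<noteq> 0" using H' p by auto
  have ab: "cnj a * a + cnj b * b = 1" using iii Dnz by simp
  have cp: "c = complex_of_real p" using ii H' by simp
  have bb: "cnj b * b = complex_of_real (p^2)"
  proof -
    have u1: "cnj a * a + complex_of_real (p^2) = 1" using U1 cp by (simp add: power2_eq_square)
    have "cnj b * b = 1 - cnj a * a" using ab by (simp add: algebra_simps)
    also have "\<dots> = complex_of_real (p^2)" using u1 by (simp add: algebra_simps)
    finally show ?thesis .
  qed
  have aa: "cnj a * a = complex_of_real (q^2)"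
  proof -
    have u1: "cnj a * a + complex_of_real (p^2) = 1" using U1 cp by (simp add: power2_eq_square)
    have "cnj a * a = 1 - complex_of_real (p^2)" using u1 by (simp add: algebra_simps)
    also have "\<dots> = complex_of_real (q^2)" using q(2) by simp
    finally show ?thesis .
  qed
  have bD: "b = - complex_of_real p * D"
  proof -
    have "b * (cnj b * D) = - complex_of_real p * b" using H' by simp
    then have "complex_of_real (p^2) * D = - complex_of_real p * b" using bb by (simp add: algebra_simps)
    then have "complex_of_real p * (complex_of_real p * D) = complex_of_real p * (- b)"
      by (simp add: power2_eq_square algebra_simps)
    moreover have "complex_of_real p \<noteq> 0" using p by simp
    ultimately have "complex_of_real p * D = - b" using mult_left_cancel by blast
    then show ?thesis by simp
  qed
  have nb: "norm b = p"
  proof -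
    have "complex_of_real ((norm b)^2) = cnj b * b" by (simp only: complex_norm_square mult.commute)
    also have "\<dots> = complex_of_real (p^2)" by (rule bb)
    finally have "complex_of_real ((norm b)^2) = complex_of_real (p^2)" .
    then have "(norm b)^2 = p^2" using of_real_eq_iff by blast
    then show ?thesis using p by (simp add: power2_eq_iff_nonneg)
  qed
  have nD: "norm D = 1"
  proof -
    have "norm (cnj b * D) = p" using H' p by simp
    then show ?thesis using nb p by (simp add: norm_mult)
  qed
  have na: "norm a = q"
  proof -
    have "complex_of_real ((norm a)^2) = cnj a * a" by (simp only: complex_norm_square mult.commute)
    also have "\<dots> = complex_of_real (q^2)" by (rule aa)
    finally have "complex_of_real ((norm a)^2) = complex_of_real (q^2)" .
    then have "(norm a)^2 = q^2" using of_real_eq_iff by blast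
    then show ?thesis using q(1) power2_eq_iff_nonneg[of "norm a" q] by simp
  qed
  define \<theta> where "\<theta> = csqrt D"
  have th2: "\<theta>^2 = D" by (simp add: \<theta>_def)
  have nth: "norm \<theta> = 1" using nD by (simp add: \<theta>_def)
  then have thnz: "\<theta> \<noteq> 0" by auto
  define \<mu> where "\<mu> = a / (complex_of_real q * \<theta>)"
  have anz: "a \<noteq> 0" using na q by auto
  have nmu: "norm \<mu> = 1" using na nth q by (simp add: \<mu>_def norm_divide norm_mult)
  then have munz: "\<mu> \<noteq> 0" by auto
  have aq: "a = complex_of_real q * \<theta> * \<mu>" using thnz q by (simp add: \<mu>_def)
  have dq: "d = complex_of_real q * \<theta> / \<mu>"
  proof -
    have "complex_of_real q * \<theta> / \<mu> = complex_of_real q * complex_of_real q * \<theta>^2 / a"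
      using thnz anz q by (simp add: \<mu>_def field_simps power2_eq_square)
    also have "\<dots> = cnj a * a * D / a" using aa th2 by (simp add: power2_eq_square)
    also have "\<dots> = cnj a * D" using anz by simp
    finally show ?thesis using i by simp
  qed
  show ?thesis
    apply (rule exI[of _ \<theta>], rule exI[of _ \<mu>])
    using nth nmu thnz munz aq cp bD th2 dq unfolding q_def by simp
qed


theorem corollary3:
  fixes \<kappa> :: nat and cRR cLR cRL cLL :: complex and \<gamma> :: real and x :: nat
  assumes "\<kappa> \<ge> 3"
    and "unitary2 cRR cLR cRL cLL"
    and "cnj cLR * det2 cRR cLR cRL cLL = 2 / of_nat \<kappa> - 1"
    and "\<gamma> = 0 \<or> \<gamma> = pi"
  defines "C \<equiv> (if \<gamma> = 0 then 0 else ((real \<kappa> - 2) / (real \<kappa> - 1))\<^sup>2)"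
  shows "(\<lambda>t. qw2_prob cRR cLR cRL cLL \<gamma> t x
             - (1 + (-1) ^ (t + x)) / 2 *
               (if x = 0 then C else real \<kappa> * C * (1 / (real \<kappa> - 1)) ^ x))
         \<longlonglongrightarrow> 0"
proof -
  define p where "p = 1 - 2 / real \<kappa>"
  have k3: "real \<kappa> \<ge> 3" using assms(1) by simp
  have p: "0 < p" "p < 1" using k3 by (auto simp: p_def field_simps)
  define q where "q = sqrt (1 - p^2)"
  have p2: "p^2 < 1" using p by (simp add: power_less_one_iff abs_less_iff)
  have q: "q > 0" "q^2 = 1 - p^2" using p2 unfolding q_def by auto
  interpret P: pq p q
    by unfold_locales (use p q in auto)
  have H: "cnj cLR * det2 cRR cLR cRL cLL = - complex_of_real p"
    using assms(3) by (simp add: p_def)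
  obtain \<theta> \<mu> where tm: "norm \<theta> = 1" "norm \<mu> = 1" "\<theta> \<noteq> 0" "\<mu> \<noteq> 0"
    "cRR = complex_of_real q * \<theta> * \<mu>" "cRL = complex_of_real p"
    "cLR = - complex_of_real p * \<theta>^2" "cLL = complex_of_real q * \<theta> / \<mu>"
    using ustruct[OF assms(2) H p] unfolding q_def by blast
  define e :: real where "e = (if \<gamma> = 0 then 1 else -1)"
  have e: "e = 1 \<or> e = -1" by (simp add: e_def)
  have g: "exp (\<i> * complex_of_real \<gamma>) = complex_of_real e"
    using assms(4) by (auto simp: e_def)
  have gauge': "qw2_state cRR cLR cRL cLL \<gamma> t = ((\<lambda>y. \<theta>^t*\<mu>^y/(\<theta>*\<mu>) * fst (qw2_state (of_real q) (- of_real p) (of_real p) (of_real q) \<gamma> t) y),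
                                 (\<lambda>y. \<theta>^t*\<mu>^y * snd (qw2_state (of_real q) (- of_real p) (of_real p) (of_real q) \<gamma> t) y))" for t
    by (rule gauge) (use tm in auto)
  have prob: "qw2_prob cRR cLR cRL cLL \<gamma> t x = qw2_prob (of_real q) (- of_real p) (of_real p) (of_real q) \<gamma> t x" for t
    unfolding qw2_prob_def Let_def gauge' using tm by (simp add: norm_mult norm_divide norm_power)
  have T: "(if x = 0 then (P.gv e)^2 else (P.gv e)^2 * (P.rr^(2*x) + P.rr^(2*x-2)))
         = (if x = 0 then C else real \<kappa> * C * (1 / (real \<kappa> - 1)) ^ x)"
  proof -
    have gC: "(P.gv e)^2 = C"
    proof (cases "\<gamma> = 0")
      case True
      then show ?thesis using p by (simp add: C_def e_def P.gv_def)
    next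
      case False
      have "P.gv e = 2 * p / (1 + p)" using False p by (simp add: e_def P.gv_def field_simps)
      also have "\<dots> = (real \<kappa> - 2) / (real \<kappa> - 1)" using k3 by (simp add: p_def field_simps)
      finally show ?thesis using False by (simp add: C_def)
    qed
    have rr2: "P.rr^2 = 1 / (real \<kappa> - 1)"
    proof -
      have "P.rr^2 = (1 - p)^2 / q^2" by (simp add: P.rr_def power_divide)
      also have "\<dots> = (1 - p) / (1 + p)"
      proof -
        have qq: "q^2 = (1-p)*(1+p)" using q(2) by (simp add: algebra_simps power2_eq_square)
        have "(1 - p)^2 / ((1-p)*(1+p)) = ((1-p)*(1-p)) / ((1-p)*(1+p))" by (simp add: power2_eq_square)
        also have "\<dots> = (1-p)/(1+p)" by (rule mult_divide_mult_cancel_left) (use p in simp)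
        finally show ?thesis unfolding qq .
      qed
      also have "\<dots> = 1 / (real \<kappa> - 1)" using k3 by (simp add: p_def field_simps)
      finally show ?thesis .
    qed
    show ?thesis
    proof (cases "x = 0")
      case True then show ?thesis using gC by simp
    next
      case False
      then obtain k where k: "x = Suc k" by (cases x) auto
      have "P.rr^(2*x) + P.rr^(2*x-2) = (P.rr^2)^x + (P.rr^2)^k"
      proof -
        have "2 * x - 2 = 2 * k" using k by simp
        then show ?thesis by (simp only: power_mult k)
      qed
      also have "\<dots> = (1 / (real \<kappa> - 1))^k * (1 / (real \<kappa> - 1) + 1)" unfolding rr2 k by (simp add: algebra_simps)
      also have "1 / (real \<kappa> - 1) + 1 = real \<kappa> * (1 / (real \<kappa> - 1))" using k3 by (simp add: field_simps)
      finally have "P.rr^(2*x) + P.rr^(2*x-2) = real \<kappa> * (1 / (real \<kappa> - 1)) ^ x"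
        unfolding k by (simp add: algebra_simps)
      then show ?thesis using False gC by simp
    qed
  qed
  show ?thesis
    using P.main_pq[OF e g, of x] unfolding prob T .
qed


end
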